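(* Let $b>1$ be an integer and let $\mathcal{A}$ be a minimal complete deterministic automaton over $A_b=\{0,\ldots,b-1\}$. Let $\ell+1$ be the number of states of $\mathcal{A}$ that belong to $0$-circuits. Then $\mathcal{A}$ accepts by value an impurely periodic set of integers if and only if the following three conditions hold: (a) there exists a pseudo-morphism $\phi:\mathcal{A}\to\mathcal{A}_{?,\ell}$ (this condition is understood to fail if $\ell=0$, since $\mathcal{A}_{?,0}$ is not defined); (b) for all states $s,s'$ of $\mathcal{A}$ distinct from the initial state, if $\phi(s)=\phi(s')$ then $s$ and $s'$ are ultimately-equivalent; (c) the initial state bears a self-loop labelled by the digit $0$ and has no other incoming transitions.
   Context: For $u=u_\ell\cdots u_0\in A_b^*$, $\mathrm{val}(u)=\sum_i u_i b^i$. An automaton accepts by value a set $X\subseteq\mathbb{N}$ if for every word $u$, $u$ is accepted iff $\mathrm{val}(u)\in X$. A set $P\subseteq\mathbb{N}$ is purely periodic if $P=R+p\mathbb{N}$ for some $p\ge1$ and $R\subseteq\{0,\ldots,p-1\}$; a set is eventually periodic if there exist $p\ge1$, $N\ge0$ with $x\in X\iff x+p\in X$ for all $x\ge N$; it is impurely periodic if it is eventually periodic but not purely periodic. $s\cdot u$ denotes the state reached from $s$ by reading $u$. A $0$-circuit is a circuit all of whose transitions are labelled $0$. For $q\ge1$, $\mathcal{A}_{?,q}$ is the complete deterministic automaton over $A_b$ with states $\{0,\ldots,q-1\}$, initial state $0$, transitions $n\xrightarrow{a}(nb+a)\bmod q$, and no specified final states. A pseudo-morphism $\mathcal{A}\to\mathcal{M}$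 between complete deterministic automata is a map $\phi$ on states sending initial state to initial state with $\phi(s\cdot a)=\phi(s)\cdot a$ for all states $s$ and letters $a$. Two states $s,s'$ are ultimately-equivalent if there is $m\ge1$ with $s\cdot u=s'\cdot u$ for all words $u$ with $|u|\ge m$. *)

theory Defs
  imports Main
begin

text \<open>Words over A_b = {0,...,b-1} are lists of digits, written most significant
digit first: the list [u_l, ..., u_0] represents u = u_l ... u_0.\<close>

definition is_word :: "nat \<Rightarrow> nat list \<Rightarrow> bool" where
  "is_word b u \<longleftrightarrow> set u \<subseteq> {0..<b}"

definition val :: "nat \<Rightarrow> nat list \<Rightarrow> nat" where
  "val b u = (\<Sum>i<length u. rev u ! i * b ^ i)"

definition complete_dfa :: "nat \<Rightarrow> 'q set \<Rightarrow> 'q \<Rightarrow> ('q \<Rightarrow> nat \<Rightarrow> 'q) \<Rightarrow> 'q set \<Rightarrow> bool" where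
  "complete_dfa b Q i delta F \<longleftrightarrow> finite Q \<and> i \<in> Q \<and> F \<subseteq> Q \<and>
     (\<forall>s\<in>Q. \<forall>a<b. delta s a \<in> Q)"

definition run :: "('q \<Rightarrow> nat \<Rightarrow> 'q) \<Rightarrow> 'q \<Rightarrow> nat list \<Rightarrow> 'q" where
  "run delta s u = foldl delta s u"

definition minimal_dfa :: "nat \<Rightarrow> 'q set \<Rightarrow> 'q \<Rightarrow> ('q \<Rightarrow> nat \<Rightarrow> 'q) \<Rightarrow> 'q set \<Rightarrow> bool" where
  "minimal_dfa b Q i delta F \<longleftrightarrow> complete_dfa b Q i delta F \<and>
     (\<forall>s\<in>Q. \<exists>u. is_word b u \<and> run delta i u = s) \<and>
     (\<forall>s\<in>Q. \<forall>t\<in>Q. s \<noteq> t \<longrightarrow>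
        (\<exists>u. is_word b u \<and> (run delta s u \<in> F) \<noteq> (run delta t u \<in> F)))"

definition accepts_by_value :: "nat \<Rightarrow> 'q \<Rightarrow> ('q \<Rightarrow> nat \<Rightarrow> 'q) \<Rightarrow> 'q set \<Rightarrow> nat set \<Rightarrow> bool" where
  "accepts_by_value b i delta F X \<longleftrightarrow>
     (\<forall>u. is_word b u \<longrightarrow> (run delta i u \<in> F \<longleftrightarrow> val b u \<in> X))"

definition purely_periodic :: "nat set \<Rightarrow> bool" where
  "purely_periodic P \<longleftrightarrow> (\<exists>p R. p \<ge> 1 \<and> R \<subseteq> {0..<p} \<and> P = {r + p * k | r k. r \<in> R})"

definition eventually_periodic :: "nat set \<Rightarrow> bool" where
  "eventually_periodic X \<longleftrightarrow> (\<exists>p N. p \<ge> 1 \<and> (\<forall>x\<ge>N. x \<in> X \<longleftrightarrow> x + p \<in> X))"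

definition impurely_periodic :: "nat set \<Rightarrow> bool" where
  "impurely_periodic X \<longleftrightarrow> eventually_periodic X \<and> \<not> purely_periodic X"

definition zero_circuit_states :: "'q set \<Rightarrow> ('q \<Rightarrow> nat \<Rightarrow> 'q) \<Rightarrow> 'q set" where
  "zero_circuit_states Q delta = {s\<in>Q. \<exists>n\<ge>1. run delta s (replicate n 0) = s}"

text \<open>Pseudo-morphism from the automaton to A_{?,q} (states {0..<q}, initial 0,
transitions n -a-> (n*b+a) mod q).\<close>
definition pseudo_morphism_mod ::
  "nat \<Rightarrow> 'q set \<Rightarrow> 'q \<Rightarrow> ('q \<Rightarrow> nat \<Rightarrow> 'q) \<Rightarrow> nat \<Rightarrow> ('q \<Rightarrow> nat) \<Rightarrow> bool" where
  "pseudo_morphism_mod b Q i delta q phi \<longleftrightarrow> q \<ge> 1 \<and>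
     (\<forall>s\<in>Q. phi s < q) \<and> phi i = 0 \<and>
     (\<forall>s\<in>Q. \<forall>a<b. phi (delta s a) = (phi s * b + a) mod q)"

definition ultimately_equivalent :: "nat \<Rightarrow> ('q \<Rightarrow> nat \<Rightarrow> 'q) \<Rightarrow> 'q \<Rightarrow> 'q \<Rightarrow> bool" where
  "ultimately_equivalent b delta s s' \<longleftrightarrow>
     (\<exists>m\<ge>1. \<forall>u. is_word b u \<and> length u \<ge> m \<longrightarrow> run delta s u = run delta s' u)"

end

theory Submission
  imports Defs
begin

lemma pow_gt: "1 < (b::nat) \<Longrightarrow> n < b ^ n"
proof (induction n)
  case 0 then show ?case by simp
next
  case (Suc n)
  have "b ^ n \<ge> 1" using Suc.prems by simp
  then have "b * b ^ n \<ge> 2 * b ^ n" using Suc.prems by simp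
  then have "Suc n < b * b ^ n" using Suc \<open>b ^ n \<ge> 1\<close> by linarith
  then show ?case by simp
qed

lemma val_Nil[simp]: "val b [] = 0" by (simp add: val_def)

lemma val_snoc: "val b (u @ [a]) = val b u * b + a"
proof -
  have "val b (u @ [a]) = (\<Sum>j<Suc (length u). (a # rev u) ! j * b ^ j)"
    by (simp add: val_def)
  also have "\<dots> = a + (\<Sum>j<length u. rev u ! j * b ^ Suc j)"
    by (subst sum.lessThan_Suc_shift) simp
  also have "\<dots> = a + b * val b u"
    by (simp add: val_def sum_distrib_left mult.assoc mult.left_commute)
  finally show ?thesis by simp
qed

lemma val_Cons: "val b (a # u) = a * b ^ length u + val b u"
proof -
  have "val b (a # u) = (\<Sum>j<Suc (length u). (rev u @ [a]) ! j * b ^ j)"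
    by (simp add: val_def)
  also have "\<dots> = (\<Sum>j<length u. (rev u @ [a]) ! j * b ^ j) + a * b ^ length u"
    by (simp add: nth_append)
  also have "(\<Sum>j<length u. (rev u @ [a]) ! j * b ^ j) = val b u"
    unfolding val_def by (rule sum.cong) (auto simp: nth_append)
  finally show ?thesis by simp
qed

lemma val_replicate0: "val b (replicate n 0) = 0"
  by (induction n) (simp_all add: val_Cons)

lemma run_Nil[simp]: "run d s [] = s" by (simp add: run_def)
lemma run_snoc: "run d s (u @ [a]) = d (run d s u) a" by (simp add: run_def)
lemma run_append: "run d s (u @ v) = run d (run d s u) v" by (simp add: run_def)
lemma run_Cons: "run d s (a # u) = run d (d s a) u" by (simp add: run_def)

lemma is_word_snoc: "is_word b (u @ [a]) \<longleftrightarrow> is_word b u \<and> a < b"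
  by (auto simp: is_word_def)
lemma is_word_Nil[simp]: "is_word b []" by (simp add: is_word_def)
lemma is_word_replicate0: "0 < b \<Longrightarrow> is_word b (replicate n 0)" by (auto simp: is_word_def)

lemma val_bound: "is_word b u \<Longrightarrow> val b u < b ^ length u"
proof (induction u rule: rev_induct)
  case Nil then show ?case by simp
next
  case (snoc a u)
  then have h: "val b u + 1 \<le> b ^ length u" "a < b" by (auto simp: is_word_snoc)
  have "(val b u + 1) * b \<le> b ^ length u * b" using h(1) by (rule mult_le_mono1)
  then have "val b u * b + b \<le> b ^ Suc (length u)" by (simp add: algebra_simps)
  then show ?case using h by (simp add: val_snoc)
qed

fun rep :: "nat \<Rightarrow> nat \<Rightarrow> nat list" where
  "rep b n = (if n = 0 \<or> b < 2 then [] else rep b (n div b) @ [n mod b])"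

declare rep.simps[simp del]

lemma rep_word: "1 < b \<Longrightarrow> is_word b (rep b n)"
proof (induction b n rule: rep.induct)
  case (1 b n) then show ?case
    by (subst rep.simps) (auto simp: is_word_snoc)
qed

lemma rep_val: "1 < b \<Longrightarrow> val b (rep b n) = n"
proof (induction b n rule: rep.induct)
  case (1 b n) then show ?case
    by (subst rep.simps) (auto simp: val_snoc)
qed

lemma rep_step: "1 < b \<Longrightarrow> a < b \<Longrightarrow> n * b + a \<noteq> 0 \<Longrightarrow> rep b (n * b + a) = rep b n @ [a]"
  by (subst rep.simps) simp

fun dl :: "nat \<Rightarrow> nat \<Rightarrow> nat \<Rightarrow> nat list" where
  "dl b 0 r = []"
| "dl b (Suc k) r = dl b k (r div b) @ [r mod b]"

lemma dl_len[simp]: "length (dl b k r) = k" by (induction k arbitrary: r) auto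
lemma dl_word: "0 < b \<Longrightarrow> is_word b (dl b k r)"
  by (induction k arbitrary: r) (auto simp: is_word_snoc)
lemma dl_val: "val b (dl b k r) = r mod b ^ k"
proof (induction k arbitrary: r)
  case 0 then show ?case by simp
next
  case (Suc k) then show ?case
    by (simp add: val_snoc mod_mult2_eq mult.commute)
qed

locale aut0 =
  fixes b :: nat and Q :: "'q set" and i :: 'q and delta :: "'q \<Rightarrow> nat \<Rightarrow> 'q" and F :: "'q set"
  assumes b1: "1 < b" and mini: "minimal_dfa b Q i delta F" and loop: "delta i 0 = i"
begin

definition st :: "nat \<Rightarrow> 'q" where "st n = run delta i (rep b n)"

lemma cdfa: "complete_dfa b Q i delta F" using mini by (simp add: minimal_dfa_def)
lemma iQ: "i \<in> Q" using cdfa by (simp add: complete_dfa_def)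
lemma finQ: "finite Q" using cdfa by (simp add: complete_dfa_def)
lemma FQ: "F \<subseteq> Q" using cdfa by (simp add: complete_dfa_def)
lemma dQ: "s \<in> Q \<Longrightarrow> a < b \<Longrightarrow> delta s a \<in> Q" using cdfa by (simp add: complete_dfa_def)

lemma run_Q: "s \<in> Q \<Longrightarrow> is_word b u \<Longrightarrow> run delta s u \<in> Q"
  by (induction u rule: rev_induct) (auto simp: run_snoc is_word_snoc dQ)

lemma st_0[simp]: "st 0 = i" by (simp add: st_def rep.simps)

lemma st_step: assumes ab: "a < b" shows "st (n * b + a) = delta (st n) a"
proof (cases "n * b + a = 0")
  case True
  then have "n = 0" "a = 0" using b1 by auto
  then show ?thesis using loop by simp
next
  case False
  then show ?thesis using b1 ab by (simp add: st_def rep_step run_snoc)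
qed

lemma st_Q: "st n \<in> Q" unfolding st_def using iQ rep_word[OF b1] by (rule run_Q)

lemma run_st: "is_word b z \<Longrightarrow> run delta (st n) z = st (n * b ^ length z + val b z)"
proof (induction z rule: rev_induct)
  case Nil then show ?case by simp
next
  case (snoc a z)
  then have "a < b" "is_word b z" by (auto simp: is_word_snoc)
  then show ?case using snoc
    by (simp add: run_snoc val_snoc st_step[symmetric] algebra_simps)
qed

lemma run_i: "is_word b u \<Longrightarrow> run delta i u = st (val b u)"
  using run_st[of u 0] by simp

lemma st_surj: "s \<in> Q \<Longrightarrow> \<exists>n. st n = s"
  using mini run_i unfolding minimal_dfa_def by metis

lemma run_dl: "run delta (st n) (dl b k r) = st (n * b ^ k + r mod b ^ k)"
  using run_st[of "dl b k r" n] dl_word[of b k r] b1 by (simp add: dl_val)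

lemma st_zeros: "run delta (st n) (replicate j 0) = st (n * b ^ j)"
  using run_st[of "replicate j 0" n] is_word_replicate0[of b j] b1 by (simp add: val_replicate0)

lemma st_eqI:
  assumes "\<And>k v. v < b ^ k \<Longrightarrow> (st (m * b ^ k + v) \<in> F \<longleftrightarrow> st (m' * b ^ k + v) \<in> F)"
  shows "st m = st m'"
proof (rule ccontr)
  assume "st m \<noteq> st m'"
  then obtain u where u: "is_word b u" "(run delta (st m) u \<in> F) \<noteq> (run delta (st m') u \<in> F)"
    using mini st_Q unfolding minimal_dfa_def by blast
  then show False using assms[of "val b u" "length u"] val_bound[OF u(1)] by (simp add: run_st)
qed

end

lemma fin_uniform:
  fixes R :: "'a \<Rightarrow> nat \<Rightarrow> bool"
  assumes "finite A" "\<forall>x\<in>A. \<exists>m. \<forall>m'\<ge>m. R x m'"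
  shows "\<exists>M. \<forall>x\<in>A. \<forall>m'\<ge>M. R x m'"
  using assms
proof (induction A rule: finite_induct)
  case empty then show ?case by simp
next
  case (insert x A)
  then obtain M where M: "\<forall>y\<in>A. \<forall>m'\<ge>M. R y m'" by auto
  obtain m where m: "\<forall>m'\<ge>m. R x m'" using insert by auto
  show ?case
  proof (intro exI[of _ "max M m"] ballI allI impI)
    fix y m' assume "y \<in> insert x A" "max M m \<le> m'"
    then show "R y m'" using M m by (auto simp: max.bounded_iff)
  qed
qed

context aut0 begin

lemma st_i_zero:
  assumes c: "\<forall>s\<in>Q. \<forall>a<b. delta s a = i \<longrightarrow> s = i \<and> a = 0"
  shows "st n = i \<Longrightarrow> n = 0"
proof (induction n rule: less_induct)
  case (less n)
  show ?case
  proof (rule ccontr)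
    assume n0: "n \<noteq> 0"
    have md: "n mod b < b" using b1 by simp
    have "n = (n div b) * b + n mod b" by simp
    then have "delta (st (n div b)) (n mod b) = i" using less.prems st_step[OF md] by metis
    then have h: "st (n div b) = i" "n mod b = 0" using c st_Q md by auto
    have "n div b < n" using n0 b1 by simp
    then have "n div b = 0" using less.IH h by blast
    then show False using h n0 by (metis div_mult_mod_eq mult_0 add_0)
  qed
qed

lemma phi_st:
  assumes pm: "pseudo_morphism_mod b Q i delta l phi"
  shows "phi (st n) = n mod l"
proof (induction n rule: less_induct)
  case (less n)
  show ?case
  proof (cases "n = 0")
    case True then show ?thesis using pm by (simp add: pseudo_morphism_mod_def)
  next
    case False
    have md: "n mod b < b" using b1 by simp
    have e: "n = (n div b) * b + n mod b" by simp
    have "n div b < n" using False b1 by simp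
    then have ih: "phi (st (n div b)) = n div b mod l" using less.IH by blast
    have "phi (st n) = phi (delta (st (n div b)) (n mod b))" using st_step[OF md] e by metis
    also have "\<dots> = (phi (st (n div b)) * b + n mod b) mod l"
      using pm st_Q md by (simp add: pseudo_morphism_mod_def)
    also have "\<dots> = (n div b * b + n mod b) mod l" using ih
      by (metis mod_add_left_eq mod_mult_left_eq)
    finally show ?thesis by simp
  qed
qed

lemma backward:
  assumes c: "\<forall>s\<in>Q. \<forall>a<b. delta s a = i \<longrightarrow> s = i \<and> a = 0"
    and pm: "pseudo_morphism_mod b Q i delta l phi"
    and ue: "\<forall>s\<in>Q. \<forall>s'\<in>Q. s \<noteq> i \<and> s' \<noteq> i \<and> phi s = phi s' \<longrightarrow> ultimately_equivalent b delta s s'"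
  shows "\<exists>X. impurely_periodic X \<and> accepts_by_value b i delta F X"
proof -
  define X where "X = {n. st n \<in> F}"
  have l1: "l \<ge> 1" using pm by (simp add: pseudo_morphism_mod_def)
  have acc: "accepts_by_value b i delta F X"
    unfolding accepts_by_value_def X_def by (simp add: run_i)
  define P where "P = {(s, s'). s \<in> Q \<and> s' \<in> Q \<and> s \<noteq> i \<and> s' \<noteq> i \<and> phi s = phi s'}"
  have "P \<subseteq> Q \<times> Q" unfolding P_def by blast
  then have finP: "finite P" using finQ by (meson finite_SigmaI finite_subset)
  define RR where "RR = (\<lambda>x m'. \<forall>u. is_word b u \<and> length u = m' \<longrightarrow> run delta (fst x) u = run delta (snd x) u)"
  have "\<forall>x\<in>P. \<exists>m. \<forall>m'\<ge>m. RR x m'"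
  proof
    fix x assume "x \<in> P"
    then obtain s s' where x: "x = (s, s')" "s \<in> Q" "s' \<in> Q" "s \<noteq> i" "s' \<noteq> i" "phi s = phi s'"
      unfolding P_def by auto
    then have "ultimately_equivalent b delta s s'" using ue by blast
    then obtain m where m: "\<forall>u. is_word b u \<and> length u \<ge> m \<longrightarrow> run delta s u = run delta s' u"
      unfolding ultimately_equivalent_def by blast
    show "\<exists>m. \<forall>m'\<ge>m. RR x m'"
    proof (intro exI allI impI)
      fix m' assume "m \<le> m'"
      then show "RR x m'" unfolding RR_def using x(1) m by simp
    qed
  qed
  then obtain M where M: "\<forall>x\<in>P. \<forall>m'\<ge>M. RR x m'"
    using fin_uniform[OF finP] by blast
  have MM: "run delta s u = run delta s' u" if "s \<in> Q" "s' \<in> Q" "s \<noteq> i" "s' \<noteq> i" "phi s = phi s'"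
    "is_word b u" "length u = M" for s s' u
  proof -
    have "(s, s') \<in> P" using that unfolding P_def by auto
    then have "RR (s, s') M" using M by blast
    then show ?thesis using that unfolding RR_def by simp
  qed
  have bM: "b ^ M \<ge> 1" using b1 by simp
  have evp: "eventually_periodic X"
    unfolding eventually_periodic_def
  proof (intro exI conjI allI impI)
    show "1 \<le> l * b ^ M" using l1 bM by simp
    fix x assume x: "b ^ M \<le> x"
    define qq where "qq = x div b ^ M"
    define r where "r = x mod b ^ M"
    have "0 < qq" using x bM b1 unfolding qq_def by (subst div_greater_zero_iff) simp
    then have qq1: "qq \<ge> 1" by simp
    have ex: "x = qq * b ^ M + r mod b ^ M" unfolding qq_def r_def using div_mult_mod_eq[of x "b ^ M"] by simp
    have ex2: "x + l * b ^ M = (qq + l) * b ^ M + r mod b ^ M" unfolding qq_def r_def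
      by (simp add: algebra_simps)
    have "st qq \<noteq> i" using st_i_zero[OF c] qq1 by auto
    moreover have "st (qq + l) \<noteq> i" using st_i_zero[OF c] qq1 by fastforce
    moreover have "phi (st qq) = phi (st (qq + l))" using phi_st[OF pm] by simp
    ultimately have "run delta (st qq) (dl b M r) = run delta (st (qq + l)) (dl b M r)"
      by (intro MM st_Q dl_word) (use b1 in auto)
    then have "st (qq * b ^ M + r mod b ^ M) = st ((qq + l) * b ^ M + r mod b ^ M)" by (simp add: run_dl)
    then have "st x = st (x + l * b ^ M)" using ex ex2 by metis
    then show "x \<in> X \<longleftrightarrow> x + l * b ^ M \<in> X" unfolding X_def by simp
  qed
  have npp: "\<not> purely_periodic X"
  proof
    assume "purely_periodic X"
    then obtain p R where pR: "p \<ge> 1" "R \<subseteq> {0..<p}" "X = {r + p * k | r k. r \<in> R}"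
      unfolding purely_periodic_def by blast
    have memX: "x \<in> X \<longleftrightarrow> x mod p \<in> R" for x
    proof
      assume "x \<in> X"
      then obtain r k where "x = r + p * k" "r \<in> R" using pR by auto
      then show "x mod p \<in> R" using pR(2) by auto
    next
      assume "x mod p \<in> R"
      moreover have "x = x mod p + p * (x div p)" by simp
      ultimately show "x \<in> X" using pR(3) by blast
    qed
    have "st p = st 0"
    proof (rule st_eqI)
      fix k v
      have "(p * b ^ k + v) mod p = (0 * b ^ k + v) mod p" by simp
      then show "st (p * b ^ k + v) \<in> F \<longleftrightarrow> st (0 * b ^ k + v) \<in> F"
        using memX unfolding X_def by (metis mem_Collect_eq)
    qed
    then have "p = 0" using st_i_zero[OF c] by simp
    then show False using pR by simp
  qed
  show ?thesis using acc evp npp unfolding impurely_periodic_def by blast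
qed

end

locale aut1 = aut0 +
  fixes X :: "nat set"
  assumes memX: "st n \<in> F \<longleftrightarrow> n \<in> X"
    and evp: "eventually_periodic X"
    and npp: "\<not> purely_periodic X"
begin

definition per :: "nat \<Rightarrow> nat \<Rightarrow> bool" where
  "per c N \<longleftrightarrow> c \<ge> 1 \<and> (\<forall>x\<ge>N. x \<in> X \<longleftrightarrow> x + c \<in> X)"

definition p :: nat where "p = (LEAST c. \<exists>N. per c N)"
definition N0 :: nat where "N0 = (SOME N. per p N)"

lemma p_ex: "\<exists>N. per p N"
proof -
  obtain c N where "per c N" using evp unfolding eventually_periodic_def per_def by blast
  then show ?thesis unfolding p_def using LeastI_ex[of "\<lambda>c. \<exists>N. per c N"] by blast
qed

lemma per_p: "per p N0" unfolding N0_def using p_ex by (rule someI_ex)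
lemma p1: "p \<ge> 1" using per_p per_def by simp
lemma p_le: "per c N \<Longrightarrow> p \<le> c" unfolding p_def by (rule Least_le) blast

lemma per_iter: "per c N \<Longrightarrow> N \<le> x \<Longrightarrow> (x \<in> X \<longleftrightarrow> x + c * t \<in> X)"
proof (induction t)
  case 0 then show ?case by simp
next
  case (Suc t)
  have "x + c * t \<ge> N" using Suc by simp
  then have "x + c * t \<in> X \<longleftrightarrow> x + c * t + c \<in> X" using Suc.prems unfolding per_def by blast
  then show ?case using Suc by (simp add: algebra_simps)
qed

lemma per_dvd: "N0 \<le> a' \<Longrightarrow> a' \<le> a \<Longrightarrow> p dvd (a - a') \<Longrightarrow> (a \<in> X \<longleftrightarrow> a' \<in> X)"
proof -
  assume h: "N0 \<le> a'" "a' \<le> a" "p dvd (a - a')"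
  then obtain t where "a - a' = p * t" by blast
  then have "a = a' + p * t" using h by simp
  then show ?thesis using per_iter[OF per_p h(1), of t] by simp
qed

lemma per_modeq: "N0 \<le> a \<Longrightarrow> N0 \<le> a' \<Longrightarrow> a mod p = a' mod p \<Longrightarrow> (a \<in> X \<longleftrightarrow> a' \<in> X)"
proof (cases "a' \<le> a")
  case True
  assume "N0 \<le> a" "N0 \<le> a'" "a mod p = a' mod p"
  then have "p dvd (a - a')" using True by (simp add: mod_eq_dvd_iff_nat)
  then show ?thesis using per_dvd[of a' a] True \<open>N0 \<le> a'\<close> by blast
next
  case False
  assume "N0 \<le> a" "N0 \<le> a'" "a mod p = a' mod p"
  then have "p dvd (a' - a)" using False mod_eq_dvd_iff_nat[of a a' p] by simp
  then show ?thesis using per_dvd[of a a'] False \<open>N0 \<le> a\<close> by simp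
qed

lemma lemS:
  assumes "N0 \<le> a'" "a' \<le> a" "p dvd (a - a')"
  shows "st a = st a'"
proof (rule st_eqI)
  fix k v
  have bk: "b ^ k \<ge> 1" using b1 by simp
  have "a' \<le> a' * b ^ k" using bk by simp
  then have "a' * b ^ k + v \<ge> N0" using assms(1) by linarith
  moreover have "a' * b ^ k + v \<le> a * b ^ k + v" using assms(2) by simp
  moreover have "(a * b ^ k + v) - (a' * b ^ k + v) = (a - a') * b ^ k"
    by (simp add: diff_mult_distrib)
  moreover have "p dvd (a - a') * b ^ k" using assms(3) by simp
  ultimately have "a * b ^ k + v \<in> X \<longleftrightarrow> a' * b ^ k + v \<in> X" using per_dvd[of "a' * b ^ k + v" "a * b ^ k + v"] by simp
  then show "st (a * b ^ k + v) \<in> F \<longleftrightarrow> st (a' * b ^ k + v) \<in> F" using memX by simp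
qed

lemma p_min:
  assumes "per D N"
  shows "p dvd D"
proof (rule ccontr)
  assume nd: "\<not> p dvd D"
  define e where "e = D mod p"
  have e1: "e \<ge> 1" using nd unfolding e_def by (simp add: dvd_eq_mod_eq_0)
  have ep: "e < p" using p1 unfolding e_def by simp
  have "per e (max N N0)" unfolding per_def
  proof (intro conjI allI impI)
    show "1 \<le> e" by (rule e1)
    fix x assume x: "max N N0 \<le> x"
    have "N \<le> x" using x by simp
    then have "x \<in> X \<longleftrightarrow> x + D \<in> X" using assms unfolding per_def by blast
    moreover have "x + D = x + e + p * (D div p)" unfolding e_def by simp
    moreover have "x + e \<in> X \<longleftrightarrow> x + e + p * (D div p) \<in> X"
      using per_iter[OF per_p, of "x + e" "D div p"] x by simp
    ultimately show "x \<in> X \<longleftrightarrow> x + e \<in> X" by simp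
  qed
  then have "p \<le> e" by (rule p_le)
  then show False using ep by simp
qed

lemma window:
  assumes m1: "1 \<le> m'" and mm: "m' < m" and eq: "st m = st m'"
  shows "\<exists>k. p dvd (m - m') * b ^ k"
proof -
  define K where "K = p + N0"
  have bK: "K < b ^ K" using pow_gt[OF b1] by simp
  define c where "c = m' * b ^ K"
  define D where "D = (m - m') * b ^ K"
  have cN: "c \<ge> N0" using m1 bK unfolding c_def K_def
    by (metis add_leD2 le_trans less_imp_le_nat mult_1 mult_le_mono1)
  have D1: "D \<ge> 1" using mm b1 unfolding D_def by simp
  have mK: "m * b ^ K = c + D" unfolding c_def D_def using mm
    by (metis add_diff_inverse_nat add_mult_distrib less_imp_le_nat not_less)
  have "per D N0" unfolding per_def
  proof (intro conjI allI impI)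
    show "1 \<le> D" by (rule D1)
    fix x assume x: "N0 \<le> x"
    define r where "r = (x + (p - c mod p)) mod p"
    have rp: "r < p" using p1 unfolding r_def by simp
    have e1: "c = p * (c div p) + c mod p" by simp
    have e2: "c mod p < p" using p1 by simp
    have "c + (x + (p - c mod p)) = x + p * (c div p) + p" using e1 e2 by linarith
    then have "(c + r) mod p = (x + p * (c div p) + p) mod p"
      unfolding r_def by (metis mod_add_right_eq)
    also have "\<dots> = x mod p" by simp
    finally have yx: "(c + r) mod p = x mod p" .
    have rK: "r < b ^ K" using rp bK unfolding K_def by linarith
    have "x \<in> X \<longleftrightarrow> c + r \<in> X" using per_modeq[of x "c + r"] x cN yx by simp
    also have "\<dots> \<longleftrightarrow> c + r + D \<in> X"
    proof -
      have "run delta (st m) (dl b K r) = run delta (st m') (dl b K r)" using eq by simp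
      then have "st (m * b ^ K + r) = st (m' * b ^ K + r)" using rK by (simp add: run_dl)
      then show ?thesis using memX mK unfolding c_def by (metis add.commute add.left_commute)
    qed
    also have "\<dots> \<longleftrightarrow> x + D \<in> X"
    proof -
      have "(c + r + D) mod p = (x + D) mod p" using yx by (metis mod_add_left_eq)
      then show ?thesis using per_modeq[of "c + r + D" "x + D"] x cN by simp
    qed
    finally show "x \<in> X \<longleftrightarrow> x + D \<in> X" .
  qed
  then have "p dvd D" by (rule p_min)
  then show ?thesis unfolding D_def by blast
qed

end

context aut1 begin

lemma c_prop: "\<forall>s\<in>Q. \<forall>a<b. delta s a = i \<longrightarrow> s = i \<and> a = 0"
proof (rule ccontr)
  assume "\<not> (\<forall>s\<in>Q. \<forall>a<b. delta s a = i \<longrightarrow> s = i \<and> a = 0)"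
  then obtain s a where sa: "s \<in> Q" "a < b" "delta s a = i" "\<not> (s = i \<and> a = 0)" by blast
  obtain n where n: "st n = s" using st_surj sa(1) by blast
  define m where "m = n * b + a"
  have stm: "st m = i" using st_step[OF sa(2), of n] sa(3) n unfolding m_def by simp
  have m0: "m \<ge> 1"
  proof (rule ccontr)
    assume "\<not> m \<ge> 1"
    then have "n * b + a = 0" unfolding m_def by linarith
    then have "n = 0" "a = 0" using b1 by auto
    then show False using sa n by simp
  qed
  have key: "x \<in> X \<longleftrightarrow> x + p \<in> X" for x
  proof -
    define K where "K = x + p + N0"
    have bK: "K < b ^ K" using pow_gt[OF b1] by simp
    have v: "m * b ^ K + v \<in> X \<longleftrightarrow> v \<in> X" if "v < b ^ K" for v
    proof -
      have "st (m * b ^ K + v mod b ^ K) = st (0 * b ^ K + v mod b ^ K)"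
        using run_dl[of m K v] run_dl[of 0 K v] stm by simp
      then have "st (m * b ^ K + v) = st v" using that by simp
      then show ?thesis using memX by metis
    qed
    have x1: "x < b ^ K" "x + p < b ^ K" using bK unfolding K_def by linarith+
    have "b ^ K \<le> m * b ^ K" using m0 by simp
    then have N: "N0 \<le> m * b ^ K + x" using bK unfolding K_def by linarith
    have "x \<in> X \<longleftrightarrow> m * b ^ K + x \<in> X" using v[OF x1(1)] by simp
    also have "\<dots> \<longleftrightarrow> m * b ^ K + x + p \<in> X" using per_p N unfolding per_def by blast
    also have "\<dots> \<longleftrightarrow> x + p \<in> X" using v[OF x1(2)] by (simp add: add.assoc)
    finally show ?thesis .
  qed
  have allt: "x \<in> X \<longleftrightarrow> x + p * t \<in> X" for x t
  proof (induction t)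
    case 0 then show ?case by simp
  next
    case (Suc t)
    have "x + p * Suc t = (x + p * t) + p" by simp
    then show ?case using Suc key[of "x + p * t"] by (simp add: algebra_simps)
  qed
  have modX: "x \<in> X \<longleftrightarrow> x mod p \<in> X" for x
  proof -
    have "x = x mod p + p * (x div p)" by simp
    then show ?thesis using allt[of "x mod p" "x div p"] by simp
  qed
  have "purely_periodic X"
    unfolding purely_periodic_def
  proof (intro exI conjI)
    show "1 \<le> p" by (rule p1)
    show "{r. r < p \<and> r \<in> X} \<subseteq> {0..<p}" by auto
    show "X = {r + p * k |r k. r \<in> {r. r < p \<and> r \<in> X}}"
    proof
      show "X \<subseteq> {r + p * k |r k. r \<in> {r. r < p \<and> r \<in> X}}"
      proof
        fix x assume "x \<in> X"
        then have "x mod p \<in> X" "x mod p < p" using modX p1 by auto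
        moreover have "x = x mod p + p * (x div p)" by simp
        ultimately show "x \<in> {r + p * k |r k. r \<in> {r. r < p \<and> r \<in> X}}" by blast
      qed
      show "{r + p * k |r k. r \<in> {r. r < p \<and> r \<in> X}} \<subseteq> X"
        using allt by auto
    qed
  qed
  then show False using npp by simp
qed

lemma st_i: "st n = i \<longleftrightarrow> n = 0" using st_i_zero[OF c_prop] by auto

end

lemma ue_sym: "ultimately_equivalent b d s s' \<Longrightarrow> ultimately_equivalent b d s' s"
  unfolding ultimately_equivalent_def by metis

context aut1 begin

definition Pdiv :: "nat \<Rightarrow> bool" where "Pdiv c \<longleftrightarrow> (\<exists>k. p dvd c * b ^ k)"
definition q :: nat where "q = (LEAST c. c \<ge> 1 \<and> Pdiv c)"

lemma q_props: "q \<ge> 1 \<and> Pdiv q"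
proof -
  have "1 \<le> p \<and> Pdiv p" using p1 unfolding Pdiv_def by (metis dvd_triv_left)
  then show ?thesis unfolding q_def by (rule LeastI)
qed

lemma q1: "q \<ge> 1" using q_props by simp

lemma q_le: "1 \<le> c \<Longrightarrow> Pdiv c \<Longrightarrow> q \<le> c" unfolding q_def by (rule Least_le) simp

lemma Qchar: "Pdiv c \<longleftrightarrow> q dvd c"
proof
  assume "q dvd c"
  then obtain t where t: "c = q * t" by blast
  obtain k where "p dvd q * b ^ k" using q_props unfolding Pdiv_def by blast
  then have "p dvd q * b ^ k * t" by simp
  then show "Pdiv c" unfolding Pdiv_def t by (metis mult.commute mult.left_commute)
next
  assume "Pdiv c"
  then obtain k1 where k1: "p dvd c * b ^ k1" unfolding Pdiv_def by blast
  obtain k2 where k2: "p dvd q * b ^ k2" using q_props unfolding Pdiv_def by blast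
  define K where "K = k1 + k2"
  have h1: "p dvd c * b ^ K" using k1 unfolding K_def by (metis dvd_mult2 mult.assoc power_add)
  have h2: "p dvd q * (c div q) * b ^ K" using k2 unfolding K_def
    by (metis dvd_mult2 mult.assoc mult.commute power_add)
  have "c * b ^ K = q * (c div q) * b ^ K + (c mod q) * b ^ K"
    by (metis add_mult_distrib div_mult_mod_eq mult.commute)
  then have "(c mod q) * b ^ K = c * b ^ K - q * (c div q) * b ^ K" by simp
  then have "p dvd (c mod q) * b ^ K" using h1 h2 by (simp add: dvd_diff_nat)
  then have P: "Pdiv (c mod q)" unfolding Pdiv_def by blast
  show "q dvd c"
  proof (rule ccontr)
    assume "\<not> q dvd c"
    then have "c mod q \<ge> 1" by (simp add: dvd_eq_mod_eq_0)
    then have "q \<le> c mod q" using q_le P by blast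
    moreover have "c mod q < q" using q1 by simp
    ultimately show False by simp
  qed
qed

lemma q_cancel: "q dvd c * b ^ j \<Longrightarrow> q dvd c"
proof -
  assume "q dvd c * b ^ j"
  then obtain k where "p dvd c * b ^ j * b ^ k" using Qchar unfolding Pdiv_def by blast
  then have "p dvd c * b ^ (j + k)" by (simp add: power_add mult.assoc)
  then show "q dvd c" using Qchar unfolding Pdiv_def by blast
qed

lemma W1: "m' < m \<Longrightarrow> st m = st m' \<Longrightarrow> q dvd (m - m')"
proof -
  assume h: "m' < m" "st m = st m'"
  show ?thesis
  proof (cases "m' = 0")
    case True
    then have "m = 0" using h st_i by simp
    then show ?thesis using h by simp
  next
    case False
    then obtain k where "p dvd (m - m') * b ^ k" using window[of m' m] h by fastforce
    then show ?thesis using Qchar unfolding Pdiv_def by blast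
  qed
qed

lemma W: "st m = st m' \<Longrightarrow> m mod q = m' mod q"
proof -
  assume h: "st m = st m'"
  consider "m' < m" | "m < m'" | "m = m'" by linarith
  then show ?thesis
  proof cases
    case 1 then show ?thesis using W1 h by (simp add: mod_eq_dvd_iff_nat)
  next
    case 2 then show ?thesis using W1[of m m'] h mod_eq_dvd_iff_nat[of m m' q] by simp
  next
    case 3 then show ?thesis by simp
  qed
qed

definition phi where "phi s = (SOME n. st n = s) mod q"

lemma phi_st: "phi (st n) = n mod q"
proof -
  have "st (SOME k. st k = st n) = st n" by (rule someI_ex) blast
  then show ?thesis unfolding phi_def by (rule W)
qed

lemma pm: "pseudo_morphism_mod b Q i delta q phi"
  unfolding pseudo_morphism_mod_def
proof (intro conjI ballI allI impI)
  show "1 \<le> q" by (rule q1)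
  fix s assume "s \<in> Q"
  then obtain n where n: "st n = s" using st_surj by blast
  show "phi s < q" unfolding n[symmetric] phi_st using q1 by simp
  fix a assume a: "a < b"
  have "phi (delta s a) = (n * b + a) mod q" using st_step[OF a, of n] n phi_st by metis
  also have "\<dots> = (n mod q * b + a) mod q" by (metis mod_add_left_eq mod_mult_left_eq)
  finally show "phi (delta s a) = (phi s * b + a) mod q" using n phi_st by metis
next
  show "phi i = 0" using phi_st[of 0] by simp
qed

lemma ue0:
  assumes n1: "1 \<le> n'" and le: "n' \<le> n" and dv: "q dvd (n - n')"
  shows "ultimately_equivalent b delta (st n) (st n')"
proof -
  obtain k where k: "p dvd (n - n') * b ^ k" using dv Qchar unfolding Pdiv_def by blast
  show ?thesis unfolding ultimately_equivalent_def
  proof (intro exI[of _ "k + N0 + 1"] conjI allI impI)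
    show "1 \<le> k + N0 + 1" by simp
    fix u assume u: "is_word b u \<and> k + N0 + 1 \<le> length u"
    define L where "L = length u"
    have bL: "L < b ^ L" using pow_gt[OF b1] by simp
    have "b ^ L \<le> n' * b ^ L" using n1 by simp
    then have N: "N0 \<le> n' * b ^ L + val b u" using bL u unfolding L_def by linarith
    have le2: "n' * b ^ L + val b u \<le> n * b ^ L + val b u" using le by simp
    have "(n * b ^ L + val b u) - (n' * b ^ L + val b u) = (n - n') * b ^ L"
      by (simp add: diff_mult_distrib)
    moreover have "b ^ L = b ^ k * b ^ (L - k)" using u unfolding L_def
      by (metis add_diff_inverse_nat le_add1 le_trans not_le power_add trans_le_add1 add.assoc)
    ultimately have "p dvd (n * b ^ L + val b u) - (n' * b ^ L + val b u)" using k
      by (metis dvd_mult2 mult.assoc)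
    then have "st (n * b ^ L + val b u) = st (n' * b ^ L + val b u)" using lemS N le2 by blast
    then show "run delta (st n) u = run delta (st n') u" using u unfolding L_def by (simp add: run_st)
  qed
qed

lemma ue:
  assumes "1 \<le> n" "1 \<le> n'" "n mod q = n' mod q"
  shows "ultimately_equivalent b delta (st n) (st n')"
proof (cases "n' \<le> n")
  case True then show ?thesis using ue0 assms by (simp add: mod_eq_dvd_iff_nat)
next
  case False
  then have "q dvd n' - n" using assms mod_eq_dvd_iff_nat[of n n' q] by simp
  then show ?thesis using ue0[of n n'] assms False by (simp add: ue_sym)
qed

end

context aut1 begin

lemma iter0: "run delta s (replicate j 0) = s \<Longrightarrow> run delta s (replicate (j * t) 0) = s"
proof (induction t)
  case 0 then show ?case by simp
next
  case (Suc t)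
  have "replicate (j * Suc t) (0::nat) = replicate j 0 @ replicate (j * t) 0"
    by (simp add: replicate_add[symmetric])
  then show ?case using Suc by (simp add: run_append)
qed

lemma Hz:
  assumes z: "st n \<in> zero_circuit_states Q delta" "st n' \<in> zero_circuit_states Q delta"
    and n1: "1 \<le> n'" and le: "n' \<le> n" and dv: "q dvd (n - n')"
  shows "st n = st n'"
proof -
  obtain j where j: "j \<ge> 1" "run delta (st n) (replicate j 0) = st n"
    using z(1) unfolding zero_circuit_states_def by blast
  obtain j' where j': "j' \<ge> 1" "run delta (st n') (replicate j' 0) = st n'"
    using z(2) unfolding zero_circuit_states_def by blast
  obtain k where k: "p dvd (n - n') * b ^ k" using dv Qchar unfolding Pdiv_def by blast
  define T where "T = k + N0 + 1"
  define L where "L = j * j' * T"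
  have LT: "T \<le> L" unfolding L_def using j(1) j'(1) by simp
  have "run delta (st n) (replicate (j * (j' * T)) 0) = st n" using iter0[OF j(2)] by blast
  then have e1: "st (n * b ^ L) = st n" unfolding L_def by (simp add: st_zeros mult.assoc)
  have "run delta (st n') (replicate (j' * (j * T)) 0) = st n'" using iter0[OF j'(2)] by blast
  then have e2: "st (n' * b ^ L) = st n'" unfolding L_def by (simp add: st_zeros mult.assoc mult.left_commute)
  have bL: "L < b ^ L" using pow_gt[OF b1] by simp
  have "b ^ L \<le> n' * b ^ L" using n1 by simp
  then have N: "N0 \<le> n' * b ^ L" using bL LT unfolding T_def by linarith
  have le2: "n' * b ^ L \<le> n * b ^ L" using le by simp
  have "b ^ L = b ^ k * b ^ (L - k)" using LT unfolding T_def
    by (metis add_diff_inverse_nat le_add1 le_trans not_le power_add trans_le_add1 add.assoc)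
  then have "p dvd (n - n') * b ^ L" using k by (metis dvd_mult2 mult.assoc)
  then have "p dvd n * b ^ L - n' * b ^ L" by (simp add: diff_mult_distrib)
  then have "st (n * b ^ L) = st (n' * b ^ L)" using lemS N le2 by blast
  then show ?thesis using e1 e2 by simp
qed

lemma e_ex: "\<exists>e\<ge>1. q dvd b ^ e - 1"
proof -
  define f where "f j = b ^ j mod q" for j
  have "\<not> inj_on f {0..q}"
  proof
    assume "inj_on f {0..q}"
    moreover have "f ` {0..q} \<subseteq> {0..<q}" unfolding f_def using q1 by auto
    ultimately have "card {0..q} \<le> card {0..<q}" by (meson card_inj_on_le finite_atLeastLessThan)
    then show False by simp
  qed
  then obtain j1 j2 where jj: "j1 \<noteq> j2" "f j1 = f j2" unfolding inj_on_def by blast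
  then obtain a c where ac: "a < c" "f a = f c"
    by (metis linorder_neqE_nat)
  define e where "e = c - a"
  have e1: "e \<ge> 1" using ac unfolding e_def by simp
  have bc: "b ^ c = b ^ e * b ^ a" unfolding e_def using ac by (simp add: power_add[symmetric])
  have "b ^ a \<le> b ^ c" using ac b1 by simp
  then have "q dvd b ^ c - b ^ a" using ac mod_eq_dvd_iff_nat[of "b ^ a" "b ^ c" q] unfolding f_def by simp
  moreover have "b ^ c - b ^ a = (b ^ e - 1) * b ^ a" using bc by (simp add: diff_mult_distrib)
  ultimately have "q dvd (b ^ e - 1) * b ^ a" by simp
  then show ?thesis using e1 q_cancel by blast
qed

lemma cardZ: "card (zero_circuit_states Q delta) = q + 1"
proof -
  define Z where "Z = zero_circuit_states Q delta"
  have ZQ: "Z \<subseteq> Q" unfolding Z_def zero_circuit_states_def by auto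
  then have finZ: "finite Z" using finQ finite_subset by blast
  have iZ: "i \<in> Z" unfolding Z_def zero_circuit_states_def using iQ loop
    by (intro CollectI conjI exI[of _ 1]) (auto simp: run_def)
  have "bij_betw phi (Z - {i}) {0..<q}"
    unfolding bij_betw_def
  proof (intro conjI)
    show "inj_on phi (Z - {i})"
    proof (rule inj_onI)
      fix s s' assume s: "s \<in> Z - {i}" and s': "s' \<in> Z - {i}" and ph: "phi s = phi s'"
      obtain n where n: "st n = s" using s ZQ st_surj by blast
      obtain n' where n': "st n' = s'" using s' ZQ st_surj by blast
      have "n \<ge> 1" "n' \<ge> 1" using n n' s s' st_i by (auto simp: Suc_le_eq)
      moreover have "n mod q = n' mod q" using ph n n' phi_st by metis
      ultimately show "s = s'"
        using Hz[of n n'] Hz[of n' n] s s' n n' unfolding Z_def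
        by (metis DiffD1 le_cases mod_eq_dvd_iff_nat)
    qed
    show "phi ` (Z - {i}) = {0..<q}"
    proof
      show "phi ` (Z - {i}) \<subseteq> {0..<q}"
      proof
        fix y assume "y \<in> phi ` (Z - {i})"
        then obtain s where s: "s \<in> Z - {i}" "y = phi s" by blast
        obtain n where "st n = s" using s ZQ st_surj by blast
        then show "y \<in> {0..<q}" using s phi_st q1 by auto
      qed
      show "{0..<q} \<subseteq> phi ` (Z - {i})"
      proof
        fix r assume r: "r \<in> {0..<q}"
        obtain e where e: "e \<ge> 1" "q dvd b ^ e - 1" using e_ex by blast
        obtain k where k: "p dvd q * b ^ k" using q_props unfolding Pdiv_def by blast
        define n where "n = r + q"
        define T where "T = k + N0 + 1"
        define L where "L = e * T"
        define s where "s = st (n * b ^ L)"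
        have n1: "n \<ge> 1" using q1 unfolding n_def by simp
        have LT: "T \<le> L" unfolding L_def using e by simp
        have bL: "L < b ^ L" using pow_gt[OF b1] by simp
        have "b ^ L \<le> n * b ^ L" using n1 by simp
        then have N: "N0 \<le> n * b ^ L" using bL LT unfolding T_def by linarith
        have bpos: "b ^ e \<ge> 1" using b1 by simp
        have le2: "n * b ^ L \<le> n * b ^ L * b ^ e" using bpos by simp
        obtain t where t: "b ^ e - 1 = q * t" using e by blast
        have "b ^ L = b ^ k * b ^ (L - k)" using LT unfolding T_def
          by (metis add_diff_inverse_nat le_add1 le_trans not_le power_add trans_le_add1 add.assoc)
        then have pq: "p dvd q * b ^ L" using k by (metis dvd_mult2 mult.assoc)
        have "n * b ^ L * b ^ e - n * b ^ L = n * b ^ L * (b ^ e - 1)" by (simp add: diff_mult_distrib2)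
        also have "\<dots> = (q * b ^ L) * (n * t)" using t by simp
        finally have "p dvd n * b ^ L * b ^ e - n * b ^ L" using pq by simp
        then have "st (n * b ^ L * b ^ e) = st (n * b ^ L)" using lemS N le2 by blast
        then have circ: "run delta s (replicate e 0) = s" unfolding s_def by (simp add: st_zeros)
        have sZ: "s \<in> Z" unfolding Z_def zero_circuit_states_def using circ e st_Q s_def by blast
        have "n * b ^ L \<noteq> 0" using n1 b1 by simp
        then have si: "s \<noteq> i" unfolding s_def using st_i by simp
        have be: "b ^ e mod q = 1 mod q" using e(2) bpos mod_eq_dvd_iff_nat[of 1 "b ^ e" q] by simp
        have "b ^ L mod q = ((b ^ e) ^ T) mod q" unfolding L_def by (simp add: power_mult)
        also have "\<dots> = ((b ^ e) mod q) ^ T mod q" by (simp add: power_mod)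
        also have "\<dots> = (1 mod q) ^ T mod q" using be by simp
        also have "\<dots> = 1 mod q" by (metis power_mod power_one)
        finally have bLq: "b ^ L mod q = 1 mod q" .
        have "phi s = (n * b ^ L) mod q" unfolding s_def by (rule phi_st)
        also have "\<dots> = (n mod q * (b ^ L mod q)) mod q" by (simp add: mod_mult_eq)
        also have "\<dots> = (r * (1 mod q)) mod q" using bLq r unfolding n_def by simp
        also have "\<dots> = r" using r by (metis mod_mult_right_eq mod_less mult.right_neutral atLeastLessThan_iff)
        finally show "r \<in> phi ` (Z - {i})" using sZ si by (metis DiffI empty_iff image_eqI insert_iff)
      qed
    qed
  qed
  then have "card (Z - {i}) = q" using bij_betw_same_card by fastforce
  then show ?thesis using finZ iZ unfolding Z_def[symmetric]
    by (metis card_Diff_singleton add.commute card.remove plus_1_eq_Suc)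
qed

end

theorem theorem44:
  fixes b :: nat and Q :: "'q set" and i :: 'q and delta :: "'q \<Rightarrow> nat \<Rightarrow> 'q" and F :: "'q set"
  assumes "b > 1"
    and "minimal_dfa b Q i delta F"
    and "card (zero_circuit_states Q delta) = l + 1"
  shows "(\<exists>X. impurely_periodic X \<and> accepts_by_value b i delta F X) \<longleftrightarrow>
    ((\<exists>phi. pseudo_morphism_mod b Q i delta l phi \<and>
        (\<forall>s\<in>Q. \<forall>s'\<in>Q. s \<noteq> i \<and> s' \<noteq> i \<and> phi s = phi s' \<longrightarrow>
           ultimately_equivalent b delta s s')) \<and>
     delta i 0 = i \<and>
     (\<forall>s\<in>Q. \<forall>a<b. delta s a = i \<longrightarrow> s = i \<and> a = 0))"
proof
  assume "\<exists>X. impurely_periodic X \<and> accepts_by_value b i delta F X"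
  then obtain X where X: "impurely_periodic X" "accepts_by_value b i delta F X" by blast
  have cd: "complete_dfa b Q i delta F" using assms(2) by (simp add: minimal_dfa_def)
  have iQ: "i \<in> Q" using cd by (simp add: complete_dfa_def)
  have dQ: "delta i 0 \<in> Q" using cd iQ assms(1) by (simp add: complete_dfa_def)
  have loop: "delta i 0 = i"
  proof (rule ccontr)
    assume "delta i 0 \<noteq> i"
    then obtain u where u: "is_word b u" "(run delta (delta i 0) u \<in> F) \<noteq> (run delta i u \<in> F)"
      using assms(2) iQ dQ unfolding minimal_dfa_def by blast
    have w0: "is_word b (0 # u)" using u(1) assms(1) by (auto simp: is_word_def)
    have "run delta (delta i 0) u \<in> F \<longleftrightarrow> val b (0 # u) \<in> X"
      using X(2) w0 run_Cons[of delta i 0 u] unfolding accepts_by_value_def by metis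
    moreover have "run delta i u \<in> F \<longleftrightarrow> val b u \<in> X"
      using X(2) u(1) unfolding accepts_by_value_def by simp
    ultimately show False using u(2) by (simp add: val_Cons)
  qed
  interpret A0: aut0 b Q i delta F using assms(1,2) loop by unfold_locales
  interpret A1: aut1 b Q i delta F X
  proof unfold_locales
    fix n
    show "A0.st n \<in> F \<longleftrightarrow> n \<in> X"
      using X(2) rep_word[OF assms(1), of n] rep_val[OF assms(1), of n]
      unfolding accepts_by_value_def A0.st_def by metis
    show "eventually_periodic X" "\<not> purely_periodic X" using X(1) unfolding impurely_periodic_def by auto
  qed
  have lq: "l = A1.q" using A1.cardZ assms(3) by simp
  show "(\<exists>phi. pseudo_morphism_mod b Q i delta l phi \<and>
        (\<forall>s\<in>Q. \<forall>s'\<in>Q. s \<noteq> i \<and> s' \<noteq> i \<and> phi s = phi s' \<longrightarrow>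
           ultimately_equivalent b delta s s')) \<and>
     delta i 0 = i \<and>
     (\<forall>s\<in>Q. \<forall>a<b. delta s a = i \<longrightarrow> s = i \<and> a = 0)"
  proof (intro conjI exI[of _ A1.phi])
    show "pseudo_morphism_mod b Q i delta l A1.phi" using A1.pm lq by simp
    show "\<forall>s\<in>Q. \<forall>s'\<in>Q. s \<noteq> i \<and> s' \<noteq> i \<and> A1.phi s = A1.phi s' \<longrightarrow> ultimately_equivalent b delta s s'"
    proof (intro ballI impI)
      fix s s' assume s: "s \<in> Q" "s' \<in> Q" and h: "s \<noteq> i \<and> s' \<noteq> i \<and> A1.phi s = A1.phi s'"
      obtain n where n: "A0.st n = s" using A0.st_surj s(1) by blast
      obtain n' where n': "A0.st n' = s'" using A0.st_surj s(2) by blast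
      have "n \<ge> 1" "n' \<ge> 1" using n n' h A1.st_i by (auto simp: Suc_le_eq)
      moreover have "n mod A1.q = n' mod A1.q" using h n n' A1.phi_st by metis
      ultimately show "ultimately_equivalent b delta s s'" using A1.ue n n' by blast
    qed
    show "delta i 0 = i" by (rule loop)
    show "\<forall>s\<in>Q. \<forall>a<b. delta s a = i \<longrightarrow> s = i \<and> a = 0" by (rule A1.c_prop)
  qed
next
  assume h: "(\<exists>phi. pseudo_morphism_mod b Q i delta l phi \<and>
        (\<forall>s\<in>Q. \<forall>s'\<in>Q. s \<noteq> i \<and> s' \<noteq> i \<and> phi s = phi s' \<longrightarrow>
           ultimately_equivalent b delta s s')) \<and>
     delta i 0 = i \<and>
     (\<forall>s\<in>Q. \<forall>a<b. delta s a = i \<longrightarrow> s = i \<and> a = 0)"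
  then obtain phi where phi: "pseudo_morphism_mod b Q i delta l phi"
    "\<forall>s\<in>Q. \<forall>s'\<in>Q. s \<noteq> i \<and> s' \<noteq> i \<and> phi s = phi s' \<longrightarrow> ultimately_equivalent b delta s s'"
    by blast
  interpret A0: aut0 b Q i delta F using assms(1,2) h by unfold_locales auto
  show "\<exists>X. impurely_periodic X \<and> accepts_by_value b i delta F X"
    using A0.backward[OF _ phi(1) phi(2)] h by blast
qed

end
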